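(* Let $\Gamma$ be a finitely generated group and $H\le\Gamma$ an amenable subgroup. If for some finite symmetric generating set $S$ the Schreier graph $\mathrm{Sch}(\Gamma,H,S)$ is multi-ended, then $\Gamma$ is extraterrestrial.
   Context: The Schreier graph $\mathrm{Sch}(\Gamma,H,S)$ has vertices the right cosets $Hg$ and edges $\{Hg,Hgs\}$, $s\in S$. A connected graph is multi-ended if there is a finite set of vertices whose removal leaves at least two infinite connected components. A finitely generated group is extraterrestrial if its Cayley graph with respect to some (equivalently any) finite symmetric generating set is extraterrestrial, where a graph $G=(V,E)$ is extraterrestrial if for every $m$ there is $k$ such that for every $r$ there is a triple $(U,F,O)$ of pairwise disjoint finite vertex sets with $U\neq\emptyset$, $|U|\ge m|F|$, a bijection $\mu:U\to O$ with $d_G(u,\mu(u))\le k$, and every path from $U$ to $O$ either contains a vertex of $F$ or has length at least $r$. *)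

theory Defs
  imports "HOL-Algebra.Algebra" "HOL-Library.Extended_Nat"
begin

definition walk :: "'v set \<Rightarrow> ('v \<Rightarrow> 'v \<Rightarrow> bool) \<Rightarrow> 'v list \<Rightarrow> bool" where
  "walk V E p \<longleftrightarrow> p \<noteq> [] \<and> set p \<subseteq> V \<and> successively E p"

definition walk_len :: "'v list \<Rightarrow> nat" where
  "walk_len p = length p - 1"

definition gdist :: "'v set \<Rightarrow> ('v \<Rightarrow> 'v \<Rightarrow> bool) \<Rightarrow> 'v \<Rightarrow> 'v \<Rightarrow> enat" where
  "gdist V E u v = (INF p \<in> {p. walk V E p \<and> hd p = u \<and> last p = v}. enat (walk_len p))"

definition graph_connected :: "'v set \<Rightarrow> ('v \<Rightarrow> 'v \<Rightarrow> bool) \<Rightarrow> bool" where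
  "graph_connected V E \<longleftrightarrow>
     V \<noteq> {} \<and> (\<forall>u\<in>V. \<forall>v\<in>V. \<exists>p. walk V E p \<and> hd p = u \<and> last p = v)"

definition induced_component :: "'v set \<Rightarrow> ('v \<Rightarrow> 'v \<Rightarrow> bool) \<Rightarrow> 'v \<Rightarrow> 'v set" where
  "induced_component W E v = {w. \<exists>p. walk W E p \<and> hd p = v \<and> last p = w}"

definition multi_ended :: "'v set \<Rightarrow> ('v \<Rightarrow> 'v \<Rightarrow> bool) \<Rightarrow> bool" where
  "multi_ended V E \<longleftrightarrow> graph_connected V E \<and>
     (\<exists>K. K \<subseteq> V \<and> finite K \<and>
        (\<exists>a\<in>V - K. \<exists>b\<in>V - K.
           infinite (induced_component (V - K) E a) \<and>
           infinite (induced_component (V - K) E b) \<and>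
           induced_component (V - K) E a \<noteq> induced_component (V - K) E b))"

definition extraterrestrial_graph :: "'v set \<Rightarrow> ('v \<Rightarrow> 'v \<Rightarrow> bool) \<Rightarrow> bool" where
  "extraterrestrial_graph V E \<longleftrightarrow>
     (\<forall>m::nat. \<exists>k::nat. \<forall>r::nat. \<exists>U F Ou \<mu>.
        U \<subseteq> V \<and> F \<subseteq> V \<and> Ou \<subseteq> V \<and> finite U \<and> finite F \<and> finite Ou \<and>
        U \<inter> F = {} \<and> U \<inter> Ou = {} \<and> F \<inter> Ou = {} \<and> U \<noteq> {} \<and>
        card U \<ge> m * card F \<and> bij_betw \<mu> U Ou \<and>
        (\<forall>u\<in>U. gdist V E u (\<mu> u) \<le> enat k) \<and>
        (\<forall>p. walk V E p \<and> hd p \<in> U \<and> last p \<in> Ou \<longrightarrow>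
              set p \<inter> F \<noteq> {} \<or> walk_len p \<ge> r))"

definition fin_symm_gen_set :: "('a, 'b) monoid_scheme \<Rightarrow> 'a set \<Rightarrow> bool" where
  "fin_symm_gen_set G S \<longleftrightarrow> finite S \<and> S \<subseteq> carrier G \<and>
     (\<forall>s\<in>S. m_inv G s \<in> S) \<and> generate G S = carrier G"

definition finitely_generated_group :: "('a, 'b) monoid_scheme \<Rightarrow> bool" where
  "finitely_generated_group G \<longleftrightarrow> (\<exists>S. finite S \<and> S \<subseteq> carrier G \<and> generate G S = carrier G)"

definition schreier_vertices :: "('a, 'b) monoid_scheme \<Rightarrow> 'a set \<Rightarrow> 'a set set" where
  "schreier_vertices G H = RCOSETS G H"

definition schreier_edge :: "('a, 'b) monoid_scheme \<Rightarrow> 'a set \<Rightarrow> 'a set \<Rightarrow> 'a set \<Rightarrow> 'a set \<Rightarrow> bool" where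
  "schreier_edge G H S A B \<longleftrightarrow>
     (\<exists>g\<in>carrier G. \<exists>s\<in>S. A = r_coset G H g \<and> B = r_coset G H (g \<otimes>\<^bsub>G\<^esub> s))"

definition cayley_edge :: "('a, 'b) monoid_scheme \<Rightarrow> 'a set \<Rightarrow> 'a \<Rightarrow> 'a \<Rightarrow> bool" where
  "cayley_edge G S x y \<longleftrightarrow> (\<exists>s\<in>S. y = x \<otimes>\<^bsub>G\<^esub> s)"

definition extraterrestrial_group :: "('a, 'b) monoid_scheme \<Rightarrow> bool" where
  "extraterrestrial_group G \<longleftrightarrow>
     (\<exists>S. fin_symm_gen_set G S \<and> extraterrestrial_graph (carrier G) (cayley_edge G S))"

definition amenable_group :: "('a, 'b) monoid_scheme \<Rightarrow> bool" where
  "amenable_group G \<longleftrightarrow> (\<exists>\<mu> :: 'a set \<Rightarrow> real.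
     \<mu> (carrier G) = 1 \<and>
     (\<forall>A \<subseteq> carrier G. \<mu> A \<ge> 0) \<and>
     (\<forall>A B. A \<subseteq> carrier G \<and> B \<subseteq> carrier G \<and> A \<inter> B = {} \<longrightarrow> \<mu> (A \<union> B) = \<mu> A + \<mu> B) \<and>
     (\<forall>g\<in>carrier G. \<forall>A \<subseteq> carrier G. \<mu> (l_coset G g A) = \<mu> A))"

definition amenable_subgroup :: "'a set \<Rightarrow> ('a, 'b) monoid_scheme \<Rightarrow> bool" where
  "amenable_subgroup H G \<longleftrightarrow> subgroup H G \<and> amenable_group (G\<lparr>carrier := H\<rparr>)"

end

theory Submission
  imports Defs
begin
lemma hall_thm:
  fixes A :: "'i \<Rightarrow> 'x set"
  assumes "finite I" "\<forall>i\<in>I. finite (A i)" "\<forall>J\<subseteq>I. card J \<le> card (\<Union>(A ` J))"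
  shows "\<exists>f. inj_on f I \<and> (\<forall>i\<in>I. f i \<in> A i)"
  using assms
proof (induction "card I" arbitrary: I A rule: less_induct)
  case less
  note fin = less.prems(1) and finA = less.prems(2) and hall = less.prems(3)
  have finU: "finite (\<Union>(A ` J))" if "J \<subseteq> I" for J
    using that fin finA by (meson finite_UN_I finite_subset subsetD)
  show ?case
  proof (cases "I = {}")
    case True then show ?thesis by auto
  next
    case Ine: False
    show ?thesis
    proof (cases "\<exists>J. J \<subseteq> I \<and> J \<noteq> {} \<and> J \<noteq> I \<and> card J = card (\<Union>(A ` J))")
      case True
      then obtain J where J: "J \<subseteq> I" "J \<noteq> {}" "J \<noteq> I" "card J = card (\<Union>(A ` J))" by blast
      have finJ: "finite J" using J(1) fin finite_subset by blast
      have "card J < card I" using J(1,3) fin by (meson psubsetI psubset_card_mono)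
      moreover have "\<forall>L\<subseteq>J. card L \<le> card (\<Union>(A ` L))" using hall J(1) by auto
      ultimately obtain f1 where f1: "inj_on f1 J" "\<forall>i\<in>J. f1 i \<in> A i"
        using less.hyps[of J A] finJ finA J(1) by blast
      define XJ where "XJ = \<Union>(A ` J)"
      define A2 where "A2 i = A i - XJ" for i
      have "card (I - J) = card I - card J" using finJ J(1) by (simp add: card_Diff_subset)
      moreover have "card J > 0" using finJ J(2) by auto
      moreover have "card J \<le> card I" using J(1) fin card_mono by blast
      ultimately have "card (I - J) < card I" by linarith
      moreover have "\<forall>L\<subseteq>I - J. card L \<le> card (\<Union>(A2 ` L))"
      proof (intro allI impI)
        fix L assume L: "L \<subseteq> I - J"
        have finL: "finite L" using L fin finite_subset by blast
        have eq: "\<Union>(A2 ` L) = \<Union>(A ` (L \<union> J)) - XJ" unfolding A2_def XJ_def by auto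
        have XS: "XJ \<subseteq> \<Union>(A ` (L \<union> J))" unfolding XJ_def by auto
        have finX: "finite XJ" unfolding XJ_def using finU J(1) by blast
        have "card (\<Union>(A2 ` L)) = card (\<Union>(A ` (L \<union> J))) - card XJ"
          unfolding eq using XS finX by (simp add: card_Diff_subset)
        moreover have "card (L \<union> J) \<le> card (\<Union>(A ` (L \<union> J)))"
          by (rule hall[rule_format]) (use L J(1) in blast)
        moreover have "card (L \<union> J) = card L + card J"
          using L finL finJ by (subst card_Un_disjoint) auto
        moreover have "card XJ = card J" using J(4) XJ_def by simp
        ultimately show "card L \<le> card (\<Union>(A2 ` L))" by linarith
      qed
      moreover have "finite (I - J)" using fin by blast
      moreover have "\<forall>i\<in>I - J. finite (A2 i)" using finA A2_def by auto
      ultimately obtain f2 where f2: "inj_on f2 (I - J)" "\<forall>i\<in>I - J. f2 i \<in> A2 i"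
        using less.hyps[of "I - J" A2] by blast
      define f where "f i = (if i \<in> J then f1 i else f2 i)" for i
      have "inj_on f I"
      proof (rule inj_onI)
        fix i j assume ij: "i \<in> I" "j \<in> I" "f i = f j"
        have XJ: "f k \<in> XJ \<longleftrightarrow> k \<in> J" if "k \<in> I" for k
          using that f1 f2 unfolding f_def XJ_def A2_def by auto
        show "i = j"
        proof (cases "i \<in> J")
          case True
          then have "j \<in> J" using XJ ij by metis
          then show ?thesis using True ij f1(1) f_def by (auto dest: inj_onD)
        next
          case False
          then have "j \<notin> J" using XJ ij by metis
          then show ?thesis using False ij f2(1) f_def by (auto dest: inj_onD)
        qed
      qed
      moreover have "\<forall>i\<in>I. f i \<in> A i" using f1 f2 f_def A2_def by auto
      ultimately show ?thesis by blast
    next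
      case False
      then have strict: "\<forall>J. J \<subseteq> I \<and> J \<noteq> {} \<and> J \<noteq> I \<longrightarrow> card J < card (\<Union>(A ` J))"
        using hall by (meson le_neq_implies_less)
      obtain i0 where i0: "i0 \<in> I" using Ine by blast
      have "card {i0} \<le> card (\<Union>(A ` {i0}))" using hall i0 by blast
      then have "card {i0} \<le> card (A i0)" by simp
      then have "A i0 \<noteq> {}" by auto
      then obtain a where a: "a \<in> A i0" by blast
      define A2 where "A2 i = A i - {a}" for i
      have "card (I - {i0}) < card I" using i0 fin by (meson card_Diff1_less)
      moreover have "\<forall>L\<subseteq>I - {i0}. card L \<le> card (\<Union>(A2 ` L))"
      proof (intro allI impI)
        fix L assume L: "L \<subseteq> I - {i0}"
        show "card L \<le> card (\<Union>(A2 ` L))"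
        proof (cases "L = {}")
          case True then show ?thesis by simp
        next
          case False
          have "L \<noteq> I" using L i0 by blast
          then have lt: "card L < card (\<Union>(A ` L))" using strict L False by blast
          have eq: "\<Union>(A2 ` L) = \<Union>(A ` L) - {a}" unfolding A2_def by auto
          have "card (\<Union>(A ` L)) - 1 \<le> card (\<Union>(A ` L) - {a})"
            using diff_card_le_card_Diff[of "{a}" "\<Union>(A ` L)"] by simp
          then show ?thesis using lt unfolding eq by linarith
        qed
      qed
      moreover have "finite (I - {i0})" using fin by blast
      moreover have "\<forall>i\<in>I - {i0}. finite (A2 i)" using finA A2_def by auto
      ultimately obtain f2 where f2: "inj_on f2 (I - {i0})" "\<forall>i\<in>I - {i0}. f2 i \<in> A2 i"
        using less.hyps[of "I - {i0}" A2] by blast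
      define f where "f = f2(i0 := a)"
      have "inj_on f I"
      proof (rule inj_onI)
        fix i j assume ij: "i \<in> I" "j \<in> I" "f i = f j"
        show "i = j"
          using ij f2 unfolding f_def A2_def
          by (cases "i = i0"; cases "j = i0") (auto dest: inj_onD)
      qed
      moreover have "\<forall>i\<in>I. f i \<in> A i" using f2 a f_def A2_def by auto
      ultimately show ?thesis by blast
    qed
  qed
qed

lemma mean_empty:
  assumes add: "\<forall>A B. A \<subseteq> H \<and> B \<subseteq> H \<and> A \<inter> B = {} \<longrightarrow> mu (A \<union> B) = mu A + mu B"
  shows "mu {} = (0::real)"
  using add[rule_format, of "{}" "{}"] by simp

lemma mean_sum:
  fixes mu :: "'a set \<Rightarrow> real"
  assumes add: "\<forall>A B. A \<subseteq> H \<and> B \<subseteq> H \<and> A \<inter> B = {} \<longrightarrow> mu (A \<union> B) = mu A + mu B"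
    and "finite I" and "\<forall>i\<in>I. Q i \<subseteq> H"
    and "\<forall>i\<in>I. \<forall>j\<in>I. i \<noteq> j \<longrightarrow> Q i \<inter> Q j = {}"
  shows "mu (\<Union>i\<in>I. Q i) = sum (\<lambda>i. mu (Q i)) I"
  using assms(2-)
proof (induction I rule: finite_induct)
  case empty
  then show ?case using mean_empty[OF add] by simp
next
  case (insert x F)
  have "mu (Q x \<union> (\<Union>i\<in>F. Q i)) = mu (Q x) + mu (\<Union>i\<in>F. Q i)"
  proof (intro add[rule_format] conjI)
    show "Q x \<inter> (\<Union>i\<in>F. Q i) = {}" using insert.prems insert.hyps by fastforce
  qed (use insert.prems in auto)
  then show ?case using insert by simp
qed

lemma mean_mono:
  fixes mu :: "'a set \<Rightarrow> real"
  assumes add: "\<forall>A B. A \<subseteq> H \<and> B \<subseteq> H \<and> A \<inter> B = {} \<longrightarrow> mu (A \<union> B) = mu A + mu B"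
    and pos: "\<forall>A \<subseteq> H. mu A \<ge> 0" and "Q \<subseteq> H"
  shows "mu Q \<le> mu H"
proof -
  have "mu (Q \<union> (H - Q)) = mu Q + mu (H - Q)" using assms by (intro add[rule_format]) blast
  moreover have "Q \<union> (H - Q) = H" using assms by blast
  moreover have "mu (H - Q) \<ge> 0" using pos by blast
  ultimately show ?thesis by simp
qed

lemma mean_contra:
  fixes mu :: "'a set \<Rightarrow> real" and G :: "('a,'b) monoid_scheme" and \<Phi> :: "'a \<times> bool \<Rightarrow> 'a"
  assumes grp: "group G" and sub: "subgroup H G"
    and one: "mu H = 1" and pos: "\<forall>A \<subseteq> H. mu A \<ge> 0"
    and add: "\<forall>A B. A \<subseteq> H \<and> B \<subseteq> H \<and> A \<inter> B = {} \<longrightarrow> mu (A \<union> B) = mu A + mu B"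
    and linv: "\<forall>g\<in>H. \<forall>A \<subseteq> H. mu (g <#\<^bsub>G\<^esub> A) = mu A"
    and W: "finite W" "W \<subseteq> H"
    and Phi_inj: "inj_on \<Phi> (H \<times> UNIV)"
    and Phi_in: "\<forall>y\<in>H. \<forall>b. \<Phi> (y,b) \<in> (\<lambda>w. w \<otimes>\<^bsub>G\<^esub> y) ` W"
  shows False
proof -
  define ch where "ch b y = (SOME w. w \<in> W \<and> \<Phi> (y,b) = w \<otimes>\<^bsub>G\<^esub> y)" for b y
  have ch: "ch b y \<in> W \<and> \<Phi> (y,b) = ch b y \<otimes>\<^bsub>G\<^esub> y" if "y \<in> H" for b y
  proof -
    have "\<exists>w. w \<in> W \<and> \<Phi> (y,b) = w \<otimes>\<^bsub>G\<^esub> y" using Phi_in that by blast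
    then show ?thesis unfolding ch_def by (rule someI_ex)
  qed
  define B where "B b w = {y \<in> H. ch b y = w}" for b w
  define P where "P b = \<Phi> ` (H \<times> {b})" for b
  have mH: "x \<otimes>\<^bsub>G\<^esub> y \<in> H" if "x \<in> H" "y \<in> H" for x y
    using sub that by (simp add: subgroup.m_closed)
  have PH: "P b \<subseteq> H" for b
    unfolding P_def using ch W mH by fastforce
  have Peq: "P b = (\<Union>w\<in>W. w <#\<^bsub>G\<^esub> B b w)" for b
  proof
    show "P b \<subseteq> (\<Union>w\<in>W. w <#\<^bsub>G\<^esub> B b w)"
    proof
      fix x assume "x \<in> P b"
      then obtain y where y: "y \<in> H" "x = \<Phi> (y,b)" unfolding P_def by auto
      then show "x \<in> (\<Union>w\<in>W. w <#\<^bsub>G\<^esub> B b w)" using ch[OF y(1), of b]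
        unfolding B_def l_coset_def by auto
    qed
  next
    show "(\<Union>w\<in>W. w <#\<^bsub>G\<^esub> B b w) \<subseteq> P b"
    proof
      fix x assume "x \<in> (\<Union>w\<in>W. w <#\<^bsub>G\<^esub> B b w)"
      then obtain w y where "w \<in> W" "y \<in> H" "ch b y = w" "x = w \<otimes>\<^bsub>G\<^esub> y"
        unfolding B_def l_coset_def by auto
      then show "x \<in> P b" using ch[of y b] unfolding P_def by force
    qed
  qed
  have BH: "B b w \<subseteq> H" for b w unfolding B_def by auto
  have LH: "w <#\<^bsub>G\<^esub> B b w \<subseteq> H" if "w \<in> W" for b w
    using that W BH mH unfolding l_coset_def by blast
  have disj1: "(w <#\<^bsub>G\<^esub> B b w) \<inter> (w' <#\<^bsub>G\<^esub> B b w') = {}" if "w \<in> W" "w' \<in> W" "w \<noteq> w'" for b w w'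
  proof (rule ccontr)
    assume "(w <#\<^bsub>G\<^esub> B b w) \<inter> (w' <#\<^bsub>G\<^esub> B b w') \<noteq> {}"
    then obtain y y' where yy: "y \<in> B b w" "y' \<in> B b w'" "w \<otimes>\<^bsub>G\<^esub> y = w' \<otimes>\<^bsub>G\<^esub> y'"
      unfolding l_coset_def by auto
    then have "\<Phi> (y,b) = \<Phi> (y',b)" using ch[of y b] ch[of y' b] unfolding B_def by auto
    then have "y = y'" using Phi_inj yy(1,2) BH by (auto dest: inj_onD)
    then show False using yy that unfolding B_def by auto
  qed
  have PB: "mu (P b) = 1" for b
  proof -
    have "mu (P b) = sum (\<lambda>w. mu (w <#\<^bsub>G\<^esub> B b w)) W"
      unfolding Peq using W(1) LH disj1 by (intro mean_sum[OF add]) auto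
    also have "\<dots> = sum (\<lambda>w. mu (B b w)) W"
      using linv BH W(2) by (intro sum.cong) auto
    also have "\<dots> = mu (\<Union>w\<in>W. B b w)"
      using W(1) BH by (intro mean_sum[OF add, symmetric]) (auto simp: B_def)
    also have "(\<Union>w\<in>W. B b w) = H" using ch unfolding B_def by auto
    finally show ?thesis using one by simp
  qed
  have "P True \<inter> P False = {}"
    unfolding P_def using Phi_inj by (auto dest: inj_onD)
  then have "mu (P True \<union> P False) = 2" using add PH PB by simp
  moreover have "mu (P True \<union> P False) \<le> mu H" using PH by (intro mean_mono[OF add pos]) auto
  ultimately show False using one by simp
qed

lemma folner_weak:
  fixes mu :: "'a set \<Rightarrow> real" and G :: "('a,'b) monoid_scheme" and Yn :: "nat \<Rightarrow> 'a set"
  assumes grp: "group G" and sub: "subgroup H G"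
    and one: "mu H = 1" and pos: "\<forall>A \<subseteq> H. mu A \<ge> 0"
    and add: "\<forall>A B. A \<subseteq> H \<and> B \<subseteq> H \<and> A \<inter> B = {} \<longrightarrow> mu (A \<union> B) = mu A + mu B"
    and linv: "\<forall>g\<in>H. \<forall>A \<subseteq> H. mu (g <#\<^bsub>G\<^esub> A) = mu A"
    and W: "finite W" "W \<subseteq> H"
    and Yfin: "\<And>N. finite (Yn N)" and Ymono: "\<And>N. Yn N \<subseteq> Yn (Suc N)" and Yun: "(\<Union>N. Yn N) = H"
  shows "\<exists>Y. finite Y \<and> Y \<noteq> {} \<and> Y \<subseteq> H \<and> card (W <#>\<^bsub>G\<^esub> Y) \<le> 2 * card Y"
proof (rule ccontr)
  assume "\<not> ?thesis"
  then have exp: "2 * card Y < card (W <#>\<^bsub>G\<^esub> Y)" if "finite Y" "Y \<noteq> {}" "Y \<subseteq> H" for Y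
    using that by (meson not_le)
  define nb where "nb y = (\<lambda>w. w \<otimes>\<^bsub>G\<^esub> y) ` W" for y
  define valid where "valid D f \<longleftrightarrow> inj_on f (D \<times> (UNIV::bool set)) \<and> (\<forall>y\<in>D. \<forall>b. f (y,b) \<in> nb y)"
    for D and f :: "'a \<times> bool \<Rightarrow> 'a"
  have YH: "Yn N \<subseteq> H" for N using Yun by blast
  have Ymono': "Yn N \<subseteq> Yn N'" if "N \<le> N'" for N N'
    using lift_Suc_mono_le[of Yn, OF Ymono that] .
  have valid_sub: "valid D' f" if "valid D f" "D' \<subseteq> D" for D D' f
    using that unfolding valid_def by (auto intro: inj_on_subset)
  have setm: "W <#>\<^bsub>G\<^esub> Y = \<Union>(nb ` Y)" for Y
    unfolding set_mult_def nb_def by auto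
  have step1: "\<exists>f. valid (Yn N) f" for N
  proof -
    define I where "I = Yn N \<times> (UNIV::bool set)"
    define A where "A = (\<lambda>(y::'a, b::bool). nb y)"
    have "finite I" unfolding I_def using Yfin by simp
    moreover have "\<forall>i\<in>I. finite (A i)" unfolding A_def nb_def using W(1) by auto
    moreover have "\<forall>J\<subseteq>I. card J \<le> card (\<Union>(A ` J))"
    proof (intro allI impI)
      fix J assume J: "J \<subseteq> I"
      define Y' where "Y' = fst ` J"
      have "Y' \<subseteq> Yn N" using J unfolding Y'_def I_def by auto
      then have finY': "finite Y'" using Yfin finite_subset by blast
      have "J \<subseteq> Y' \<times> (UNIV::bool set)"
      proof
        fix p assume "p \<in> J" then show "p \<in> Y' \<times> UNIV" unfolding Y'_def by (cases p) force
      qed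
      then have "card J \<le> card (Y' \<times> (UNIV::bool set))" using finY' by (intro card_mono) auto
      also have "\<dots> = 2 * card Y'" by (simp add: card_cartesian_product)
      finally have c1: "card J \<le> 2 * card Y'" .
      have Aeq: "A = nb \<circ> fst" unfolding A_def by auto
      have UA: "\<Union>(A ` J) = W <#>\<^bsub>G\<^esub> Y'" unfolding setm Aeq Y'_def image_comp ..
      show "card J \<le> card (\<Union>(A ` J))"
      proof (cases "Y' = {}")
        case True then show ?thesis using c1 by simp
      next
        case False
        have "Y' \<subseteq> H" using \<open>Y' \<subseteq> Yn N\<close> YH by blast
        then show ?thesis using exp[OF finY' False] c1 UA by simp
      qed
    qed
    ultimately obtain f where "inj_on f I" "\<forall>i\<in>I. f i \<in> A i" using hall_thm by blast
    then have "valid (Yn N) f" unfolding valid_def I_def A_def by auto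
    then show ?thesis by blast
  qed
  \<comment> \<open>Step 2: compactness\<close>
  define C where "C N = {f \<in> (Yn N \<times> (UNIV::bool set)) \<rightarrow>\<^sub>E (W <#>\<^bsub>G\<^esub> Yn N). valid (Yn N) f}" for N
  have Cfin: "finite (C N)" for N
  proof -
    have "finite (W <#>\<^bsub>G\<^esub> Yn N)" unfolding setm nb_def using W(1) Yfin by auto
    then have "finite ((Yn N \<times> (UNIV::bool set)) \<rightarrow>\<^sub>E (W <#>\<^bsub>G\<^esub> Yn N))"
      using Yfin by (intro finite_PiE) auto
    then show ?thesis unfolding C_def by auto
  qed
  have restr_C: "restrict g (Yn N \<times> UNIV) \<in> C N" if "valid (Yn N') g" "N \<le> N'" for g N N'
  proof -
    have v: "valid (Yn N) g" using valid_sub[OF that(1) Ymono'[OF that(2)]] .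
    then have "valid (Yn N) (restrict g (Yn N \<times> UNIV))"
      unfolding valid_def by (auto simp: inj_on_def)
    moreover have "restrict g (Yn N \<times> UNIV) \<in> (Yn N \<times> (UNIV::bool set)) \<rightarrow>\<^sub>E (W <#>\<^bsub>G\<^esub> Yn N)"
      using v unfolding valid_def setm by auto
    ultimately show ?thesis unfolding C_def by auto
  qed
  have pick: "\<exists>f\<in>C N. \<forall>N'\<ge>N. \<exists>g. valid (Yn N') g \<and> P g \<and> restrict g (Yn N \<times> UNIV) = f"
    if hyp: "\<forall>N'\<ge>N. \<exists>g. valid (Yn N') g \<and> P g" for N P
  proof (rule ccontr)
    assume "\<not> ?thesis"
    then have ex: "\<forall>f\<in>C N. \<exists>N'. N' \<ge> N \<and> (\<forall>g. valid (Yn N') g \<and> P g \<longrightarrow> restrict g (Yn N \<times> UNIV) \<noteq> f)"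
      by blast
    obtain bd where bd: "\<forall>f\<in>C N. bd f \<ge> N \<and> (\<forall>g. valid (Yn (bd f)) g \<and> P g \<longrightarrow> restrict g (Yn N \<times> UNIV) \<noteq> f)"
      using bchoice[OF ex] by blast
    define M where "M = Max (insert N (bd ` C N))"
    have fM: "finite (insert N (bd ` C N))" using Cfin by simp
    have "M \<ge> N" unfolding M_def using fM by simp
    then obtain g where g: "valid (Yn M) g" "P g" using hyp by blast
    define f where "f = restrict g (Yn N \<times> UNIV)"
    have fC: "f \<in> C N" unfolding f_def using restr_C[OF g(1) \<open>M \<ge> N\<close>] .
    then have "bd f \<le> M" unfolding M_def using fM by simp
    then have "valid (Yn (bd f)) g" using valid_sub[OF g(1) Ymono'] by blast
    then show False using bd fC g(2) f_def by blast
  qed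
  define Pg where "Pg N f \<longleftrightarrow> f \<in> C N \<and> (\<forall>N'\<ge>N. \<exists>g. valid (Yn N') g \<and> restrict g (Yn N \<times> UNIV) = f)" for N f
  have "\<exists>seq. \<forall>n. Pg n (seq n) \<and> restrict (seq (Suc n)) (Yn n \<times> UNIV) = seq n"
  proof (rule dependent_nat_choice)
    show "\<exists>x. Pg 0 x" using pick[of 0 "\<lambda>_. True"] step1 unfolding Pg_def by blast
  next
    fix x n assume "Pg n x"
    then have hx: "\<forall>N'\<ge>Suc n. \<exists>g. valid (Yn N') g \<and> restrict g (Yn n \<times> UNIV) = x"
      unfolding Pg_def by auto
    obtain y where y: "y \<in> C (Suc n)"
      "\<forall>N'\<ge>Suc n. \<exists>g. valid (Yn N') g \<and> restrict g (Yn n \<times> UNIV) = x \<and> restrict g (Yn (Suc n) \<times> UNIV) = y"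
      using pick[OF hx] by blast
    have "Pg (Suc n) y" unfolding Pg_def using y by blast
    moreover obtain g where g: "restrict g (Yn n \<times> UNIV) = x" "restrict g (Yn (Suc n) \<times> UNIV) = y"
      using y(2) by blast
    have sub: "(Yn (Suc n) \<times> UNIV) \<inter> (Yn n \<times> UNIV) = Yn n \<times> (UNIV::bool set)"
      using Ymono[of n] by blast
    have "restrict y (Yn n \<times> UNIV) = x"
      unfolding g(2)[symmetric] g(1)[symmetric] restrict_restrict sub ..
    ultimately show "\<exists>y. Pg (Suc n) y \<and> restrict y (Yn n \<times> UNIV) = x" by blast
  qed
  then obtain seq where seq: "\<And>n. Pg n (seq n)" "\<And>n. restrict (seq (Suc n)) (Yn n \<times> UNIV) = seq n"
    by blast
  have seqv: "valid (Yn n) (seq n)" for n using seq(1)[of n] unfolding Pg_def C_def by auto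
  have cons: "seq (N + d) x = seq N x" if "x \<in> Yn N \<times> UNIV" for N d x
  proof (induction d)
    case 0 then show ?case by simp
  next
    case (Suc d)
    have "x \<in> Yn (N + d) \<times> UNIV" using that Ymono'[of N "N + d"] by auto
    then have "seq (Suc (N + d)) x = seq (N + d) x"
      using fun_cong[OF seq(2)[of "N + d"], of x] by simp
    then show ?case using Suc by simp
  qed
  have cons': "seq N' x = seq N x" if "x \<in> Yn N \<times> UNIV" "N \<le> N'" for N N' x
    using cons[OF that(1), of "N' - N"] that(2) by simp
  define ny where "ny y = (LEAST N. y \<in> Yn N)" for y
  have ny: "y \<in> Yn (ny y)" if "y \<in> H" for y
    using that Yun unfolding ny_def by (metis (mono_tags, lifting) LeastI UN_E)
  define \<Phi> where "\<Phi> p = seq (ny (fst p)) p" for p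
  have Phi_inj: "inj_on \<Phi> (H \<times> UNIV)"
  proof (rule inj_onI)
    fix p q assume p: "p \<in> H \<times> UNIV" and q: "q \<in> H \<times> UNIV" and e: "\<Phi> p = \<Phi> q"
    define N where "N = max (ny (fst p)) (ny (fst q))"
    have pN: "p \<in> Yn N \<times> UNIV" using ny[of "fst p"] p Ymono'[of "ny (fst p)" N] unfolding N_def
      by (auto simp: mem_Times_iff)
    have qN: "q \<in> Yn N \<times> UNIV" using ny[of "fst q"] q Ymono'[of "ny (fst q)" N] unfolding N_def
      by (auto simp: mem_Times_iff)
    have "\<Phi> p = seq N p" unfolding \<Phi>_def N_def using ny[of "fst p"] p
      by (intro cons'[symmetric]) (auto simp: mem_Times_iff)
    moreover have "\<Phi> q = seq N q" unfolding \<Phi>_def N_def using ny[of "fst q"] q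
      by (intro cons'[symmetric]) (auto simp: mem_Times_iff)
    ultimately have "seq N p = seq N q" using e by simp
    then show "p = q" using seqv[of N] pN qN unfolding valid_def by (auto dest: inj_onD)
  qed
  have Phi_in: "\<forall>y\<in>H. \<forall>b. \<Phi> (y,b) \<in> (\<lambda>w. w \<otimes>\<^bsub>G\<^esub> y) ` W"
    using seqv ny unfolding \<Phi>_def valid_def nb_def by auto
  show False using mean_contra[OF grp sub one pos add linv W Phi_inj Phi_in] .
qed

lemma walk_append:
  assumes "walk V E p" "walk V E q" "last p = hd q"
  shows "walk V E (p @ tl q)" "hd (p @ tl q) = hd p" "last (p @ tl q) = last q"
    "walk_len (p @ tl q) = walk_len p + walk_len q"
proof -
  have pq: "p \<noteq> []" "q \<noteq> []" using assms unfolding walk_def by auto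
  then obtain x q' where q: "q = x # q'" by (cases q) auto
  have "successively E p" "successively E q" "set p \<subseteq> V" "set q \<subseteq> V" using assms unfolding walk_def by auto
  then show "walk V E (p @ tl q)" unfolding walk_def using pq q assms(3)
    by (auto simp: successively_append_iff successively_Cons)
  show "hd (p @ tl q) = hd p" using pq by simp
  show "last (p @ tl q) = last q" using pq q assms(3) by (cases q') auto
  show "walk_len (p @ tl q) = walk_len p + walk_len q" unfolding walk_len_def using pq q by (cases p) auto
qed

lemma walk_rev:
  assumes "walk V E p" "\<And>x y. E x y \<Longrightarrow> E y x"
  shows "walk V E (rev p)" "hd (rev p) = last p" "last (rev p) = hd p"
proof -
  have "successively E p" using assms unfolding walk_def by auto
  then have "successively (\<lambda>x y. E y x) p" by (rule successively_mono) (use assms(2) in blast)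
  then show "walk V E (rev p)" using assms(1) unfolding walk_def by auto
  show "hd (rev p) = last p" "last (rev p) = hd p" using assms(1) unfolding walk_def
    by (auto simp: hd_rev last_rev)
qed

lemma walk_map:
  assumes "walk V E p" "\<forall>x\<in>set p. f x \<in> V'" "\<And>x y. x \<in> V \<Longrightarrow> y \<in> V \<Longrightarrow> E x y \<Longrightarrow> E' (f x) (f y)"
  shows "walk V' E' (map f p)" "hd (map f p) = f (hd p)" "last (map f p) = f (last p)"
proof -
  have "successively E p" "set p \<subseteq> V" "p \<noteq> []" using assms unfolding walk_def by auto
  have "successively (\<lambda>x y. E' (f x) (f y)) p" using \<open>successively E p\<close>
  proof (rule successively_mono)
    fix x y assume "x \<in> set p" "y \<in> set p" "E x y"
    then show "E' (f x) (f y)" using assms(3) \<open>set p \<subseteq> V\<close> by blast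
  qed
  then show "walk V' E' (map f p)" using assms(2) \<open>p \<noteq> []\<close> unfolding walk_def
    by (auto simp: successively_map)
  show "hd (map f p) = f (hd p)" "last (map f p) = f (last p)" using \<open>p \<noteq> []\<close>
    by (auto simp: hd_map last_map)
qed

lemma walk_take:
  assumes "walk V E p" "i < length p"
  shows "walk V E (take (Suc i) p)" "hd (take (Suc i) p) = hd p" "last (take (Suc i) p) = p ! i"
    "walk_len (take (Suc i) p) = i"
proof -
  have "p = take (Suc i) p @ drop (Suc i) p" by simp
  then have "successively E (take (Suc i) p)" using assms(1) unfolding walk_def
    by (metis successively_append_iff)
  moreover have "set (take (Suc i) p) \<subseteq> V" using assms(1) unfolding walk_def
    by (meson order_trans set_take_subset)
  ultimately show "walk V E (take (Suc i) p)" using assms(2) unfolding walk_def by auto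
  show "hd (take (Suc i) p) = hd p" using assms(2) by (cases p) auto
  show "last (take (Suc i) p) = p ! i" using assms(2) by (simp add: take_Suc_conv_app_nth)
  show "walk_len (take (Suc i) p) = i" using assms(2) unfolding walk_len_def by simp
qed

lemma gdist_le:
  assumes "walk V E p" "hd p = u" "last p = v"
  shows "gdist V E u v \<le> enat (walk_len p)"
  unfolding gdist_def using assms by (intro INF_lower) auto

lemma comp_walk:
  assumes "c \<in> induced_component W E a" "walk W E q" "hd q = c"
  shows "last q \<in> induced_component W E a"
proof -
  obtain p where p: "walk W E p" "hd p = a" "last p = c" using assms(1) unfolding induced_component_def by auto
  have "walk W E (p @ tl q) \<and> hd (p @ tl q) = a \<and> last (p @ tl q) = last q"
    using walk_append[OF p(1) assms(2)] p assms by simp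
  then show ?thesis unfolding induced_component_def by blast
qed

lemma comp_subset:
  assumes "c \<in> induced_component W E a"
  shows "c \<in> W"
proof -
  obtain p where p: "walk W E p" "hd p = a" "last p = c" using assms unfolding induced_component_def by auto
  then show ?thesis unfolding walk_def by auto
qed

lemma comp_meet:
  assumes sym: "\<And>x y. E x y \<Longrightarrow> E y x"
    and "d \<in> induced_component W E a" "d \<in> induced_component W E b"
  shows "induced_component W E a = induced_component W E b"
proof -
  have sub: "induced_component W E x \<subseteq> induced_component W E y"
    if d1: "d \<in> induced_component W E x" and d2: "d \<in> induced_component W E y" for x y
  proof
    fix z assume z: "z \<in> induced_component W E x"
    obtain p where p: "walk W E p" "hd p = x" "last p = d" using d1 unfolding induced_component_def by blast
    obtain q where q: "walk W E q" "hd q = x" "last q = z" using z unfolding induced_component_def by blast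
    have "x \<in> induced_component W E y"
      using comp_walk[OF d2 walk_rev(1)[OF p(1) sym]] walk_rev(2,3)[OF p(1) sym] p by auto
    then show "z \<in> induced_component W E y" using comp_walk[OF _ q(1)] q by auto
  qed
  show ?thesis using sub assms(2,3) by blast
qed

primrec Bl :: "('a, 'b) monoid_scheme \<Rightarrow> 'a set \<Rightarrow> nat \<Rightarrow> 'a set" where
  "Bl G S 0 = {\<one>\<^bsub>G\<^esub>}"
| "Bl G S (Suc n) = Bl G S n \<union> (\<lambda>(s,x). s \<otimes>\<^bsub>G\<^esub> x) ` (S \<times> Bl G S n)"

lemma Bl_finite: "finite S \<Longrightarrow> finite (Bl G S n)"
  by (induction n) auto

lemma Bl_mono: "n \<le> m \<Longrightarrow> Bl G S n \<subseteq> Bl G S m"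
  by (rule lift_Suc_mono_le[of "Bl G S"]) auto

context group
begin

lemma Bl_carrier: "S \<subseteq> carrier G \<Longrightarrow> Bl G S n \<subseteq> carrier G"
  by (induction n) auto

lemma Bl_mult:
  assumes "S \<subseteq> carrier G" "x \<in> Bl G S n" "y \<in> Bl G S m"
  shows "x \<otimes> y \<in> Bl G S (n + m)"
  using assms(2)
proof (induction n arbitrary: x)
  case 0
  then have "x = \<one>" by simp
  moreover have "y \<in> carrier G" using assms(3) Bl_carrier[OF assms(1)] by blast
  ultimately show ?case using assms(3) by simp
next
  case (Suc n)
  show ?case
  proof (cases "x \<in> Bl G S n")
    case True
    then show ?thesis using Suc.IH Bl_mono[of "n + m" "Suc n + m" G S] by auto
  next
    case False
    then obtain s x' where sx: "s \<in> S" "x' \<in> Bl G S n" "x = s \<otimes> x'" using Suc.prems by auto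
    have "x' \<otimes> y \<in> Bl G S (n + m)" using Suc.IH sx(2) by blast
    moreover have "x \<otimes> y = s \<otimes> (x' \<otimes> y)"
    proof -
      have "s \<in> carrier G" "x' \<in> carrier G" "y \<in> carrier G"
        using sx assms(1,3) Bl_carrier[OF assms(1)] by blast+
      then show ?thesis using sx(3) by (simp add: m_assoc)
    qed
    ultimately have "x \<otimes> y \<in> (\<lambda>(s,x). s \<otimes> x) ` (S \<times> Bl G S (n + m))"
      using sx(1) by (intro image_eqI[where x="(s, x' \<otimes> y)"]) auto
    then show ?thesis by simp
  qed
qed

lemma gen_Bl:
  assumes "S \<subseteq> carrier G" "\<forall>s\<in>S. inv s \<in> S" "x \<in> generate G S"
  shows "\<exists>n. x \<in> Bl G S n"
  using assms(3)
proof (induction rule: generate.induct)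
  case one
  then show ?case by (intro exI[of _ 0]) simp
next
  case (incl h)
  have "h \<otimes> \<one> \<in> Bl G S (Suc 0)" unfolding Bl.simps
    by (rule UnI2, rule image_eqI[where x="(h,\<one>)"]) (use incl in auto)
  moreover have "h \<in> carrier G" using incl assms by auto
  ultimately have "h \<in> Bl G S (Suc 0)" by simp
  then show ?case by blast
next
  case (inv h)
  have "inv h \<otimes> \<one> \<in> Bl G S (Suc 0)" unfolding Bl.simps
    by (rule UnI2, rule image_eqI[where x="(inv h,\<one>)"]) (use inv assms(2) in auto)
  moreover have "inv h \<in> carrier G" using inv assms by auto
  ultimately have "inv h \<in> Bl G S (Suc 0)" by simp
  then show ?case by blast
next
  case (eng h1 h2)
  then show ?case using Bl_mult[OF assms(1)] by blast
qed

lemma walk_Bl: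
  assumes "S \<subseteq> carrier G" "walk (carrier G) (cayley_edge G S) p"
  shows "\<exists>z\<in>Bl G S (walk_len p). last p = hd p \<otimes> z"
  using assms(2)
proof (induction p)
  case Nil
  then show ?case by (simp add: walk_def)
next
  case (Cons x p)
  show ?case
  proof (cases "p = []")
    case True
    then show ?thesis using Cons.prems by (auto simp: walk_def walk_len_def)
  next
    case False
    have wp: "walk (carrier G) (cayley_edge G S) p" using Cons.prems False
      by (auto simp: walk_def successively_Cons)
    have e: "cayley_edge G S x (hd p)" using Cons.prems False
      by (auto simp: walk_def successively_Cons)
    then obtain s where s: "s \<in> S" "hd p = x \<otimes> s" unfolding cayley_edge_def by auto
    obtain z where z: "z \<in> Bl G S (walk_len p)" "last p = hd p \<otimes> z" using Cons.IH wp by blast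
    have x: "x \<in> carrier G" using Cons.prems by (auto simp: walk_def)
    have "s \<otimes> z \<in> Bl G S (Suc (walk_len p))" using s z by force
    moreover have "walk_len (x # p) = Suc (walk_len p)" using False by (simp add: walk_len_def)
    moreover have "last (x # p) = x \<otimes> (s \<otimes> z)"
    proof -
      have "s \<in> carrier G" "z \<in> carrier G" using s z assms(1) Bl_carrier[OF assms(1)] by blast+
      then show ?thesis using z s x False by (simp add: m_assoc)
    qed
    ultimately show ?thesis by auto
  qed
qed

lemma Bl_walk:
  assumes "S \<subseteq> carrier G" "z \<in> Bl G S n" "y \<in> carrier G"
  shows "\<exists>p. walk (carrier G) (cayley_edge G S) p \<and> hd p = y \<and> last p = y \<otimes> z \<and> walk_len p \<le> n"
  using assms(2,3)
proof (induction n arbitrary: z y)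
  case 0
  then show ?case by (intro exI[of _ "[y]"]) (auto simp: walk_def walk_len_def)
next
  case (Suc n)
  show ?case
  proof (cases "z \<in> Bl G S n")
    case True
    then show ?thesis using Suc.IH Suc.prems by force
  next
    case False
    then obtain s z' where sz: "s \<in> S" "z' \<in> Bl G S n" "z = s \<otimes> z'" using Suc.prems by auto
    have ys: "y \<otimes> s \<in> carrier G" using sz Suc.prems assms(1) by auto
    obtain p where p: "walk (carrier G) (cayley_edge G S) p" "hd p = y \<otimes> s" "last p = (y \<otimes> s) \<otimes> z'"
      "walk_len p \<le> n"
      using Suc.IH[OF sz(2) ys] by blast
    have pne: "p \<noteq> []" using p(1) by (simp add: walk_def)
    have "walk (carrier G) (cayley_edge G S) (y # p)"
      using p pne Suc.prems sz(1) unfolding walk_def cayley_edge_def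
      by (auto simp: successively_Cons)
    moreover have "last (y # p) = y \<otimes> z"
    proof -
      have "s \<in> carrier G" "z' \<in> carrier G" using sz assms(1) Bl_carrier[OF assms(1)] by blast+
      then show ?thesis using p(3) pne sz(3) Suc.prems(2) by (simp add: m_assoc)
    qed
    moreover have "walk_len (y # p) \<le> Suc n" using p(4) pne by (simp add: walk_len_def)
    ultimately show ?thesis by force
  qed
qed

end

context group
begin

lemma main_aux:
  assumes "amenable_subgroup H G"
    and "fin_symm_gen_set G S"
    and "multi_ended (schreier_vertices G H) (schreier_edge G H S)"
  shows "extraterrestrial_group G"
proof -
  have grp: "group G" by (rule is_group)
  have Sfin: "finite S" and SG: "S \<subseteq> carrier G" and Sinv: "\<forall>s\<in>S. inv s \<in> S"
    and gen: "generate G S = carrier G"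
    using assms(2) unfolding fin_symm_gen_set_def by auto
  have sub: "subgroup H G" and am: "amenable_group (G\<lparr>carrier := H\<rparr>)"
    using assms(1) unfolding amenable_subgroup_def by auto
  have HG: "H \<subseteq> carrier G" using sub by (rule subgroup.subset)
  obtain mu :: "'a set \<Rightarrow> real" where one: "mu H = 1" and pos: "\<forall>A\<subseteq>H. mu A \<ge> 0"
    and add: "\<forall>A B. A \<subseteq> H \<and> B \<subseteq> H \<and> A \<inter> B = {} \<longrightarrow> mu (A \<union> B) = mu A + mu B"
    and linv0: "\<forall>g\<in>H. \<forall>A\<subseteq>H. mu (l_coset (G\<lparr>carrier := H\<rparr>) g A) = mu A"
    using am unfolding amenable_group_def by auto
  have linv: "\<forall>g\<in>H. \<forall>A\<subseteq>H. mu (g <# A) = mu A"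
    using linv0 by (simp add: l_coset_def)
  define V where "V = schreier_vertices G H"
  define E where "E = schreier_edge G H S"
  obtain K a b where K: "K \<subseteq> V" "finite K" and ab: "a \<in> V - K" "b \<in> V - K"
    and infa: "infinite (induced_component (V - K) E a)"
    and infb: "infinite (induced_component (V - K) E b)"
    and neq: "induced_component (V - K) E a \<noteq> induced_component (V - K) E b"
  proof -
    have "multi_ended V E" using assms(3) unfolding V_def E_def .
    then show ?thesis unfolding multi_ended_def by (elim conjE exE bexE) (rule that)
  qed
  define CA where "CA = induced_component (V - K) E a"
  define CB where "CB = induced_component (V - K) E b"
  have Esym: "E y x" if exy: "E x y" for x y
  proof -
    obtain g s where g: "g \<in> carrier G" "s \<in> S" "x = H #> g" "y = H #> (g \<otimes> s)"
      using exy unfolding E_def schreier_edge_def by (elim bexE conjE) (rule that)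
    have sc: "s \<in> carrier G" using g SG by auto
    have "g \<otimes> s \<in> carrier G" "inv s \<in> S" using g sc Sinv by auto
    moreover have "g \<otimes> s \<otimes> inv s = g" using g sc by (simp add: m_assoc)
    ultimately have "\<exists>g'\<in>carrier G. \<exists>s'\<in>S. y = H #> g' \<and> x = H #> (g' \<otimes> s')"
      using g by (intro bexI[where x="g \<otimes> s"] bexI[where x="inv s"]) auto
    then show "E y x" unfolding E_def schreier_edge_def .
  qed
  have piV: "H #> x \<in> V" if "x \<in> carrier G" for x
    using that unfolding V_def schreier_vertices_def RCOSETS_def by auto
  have piE: "E (H #> x) (H #> y)" if xc: "x \<in> carrier G" and cxy: "cayley_edge G S x y" for x y
  proof -
    obtain s where "s \<in> S" "y = x \<otimes> s" using cxy unfolding cayley_edge_def by blast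
    then show ?thesis unfolding E_def schreier_edge_def using xc
      by (intro bexI[where x=x] bexI[where x=s]) auto
  qed
  have piH: "H #> (h \<otimes> x) = H #> x" if "h \<in> H" "x \<in> carrier G" for h x
  proof -
    have "H #> (h \<otimes> x) = (H #> h) #> x" using that HG by (simp add: coset_mult_assoc subsetD)
    also have "H #> h = H" using that HG sub by (simp add: coset_join2 subsetD)
    finally show ?thesis .
  qed
  define rep where "rep c = (SOME g. g \<in> carrier G \<and> c = H #> g)" for c
  have rep: "rep c \<in> carrier G \<and> c = H #> rep c" if "c \<in> V" for c
  proof -
    have "\<exists>g. g \<in> carrier G \<and> c = H #> g" using that unfolding V_def schreier_vertices_def RCOSETS_def by auto
    then show ?thesis unfolding rep_def by (rule someI_ex)
  qed
  have CAV: "CA \<subseteq> V - K" unfolding CA_def by (rule subsetI, rule comp_subset)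
  have CBV: "CB \<subseteq> V - K" unfolding CB_def by (rule subsetI, rule comp_subset)
  have disj: "CA \<inter> CB = {}"
  proof (rule ccontr)
    assume "CA \<inter> CB \<noteq> {}"
    then obtain d where d1: "d \<in> CA" and d2: "d \<in> CB" by blast
    have "CA = CB" unfolding CA_def CB_def
      by (rule comp_meet[OF Esym d1[unfolded CA_def] d2[unfolded CB_def]])
    then show False using neq unfolding CA_def CB_def by simp
  qed
  have inH: "inv h \<in> H" if "h \<in> H" for h using sub that by (rule subgroup.m_inv_closed)
  have cancel1: "x \<otimes> (inv x \<otimes> y) = y" if "x \<in> carrier G" "y \<in> carrier G" for x y
    using that by (simp add: m_assoc[symmetric])
  have "extraterrestrial_graph (carrier G) (cayley_edge G S)"
    unfolding extraterrestrial_graph_def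
  proof
    fix m :: nat
    define n where "n = card K"
    define M where "M = 2 * n * m + 1"
    obtain Ca where Ca: "Ca \<subseteq> CA" "finite Ca" "card Ca = M"
      using infinite_arbitrarily_large[OF infa[folded CA_def]] by blast
    obtain Cb where Cb: "Cb \<subseteq> CB" "finite Cb" "card Cb = M"
      using infinite_arbitrarily_large[OF infb[folded CB_def]] by blast
    obtain \<beta> where \<beta>: "bij_betw \<beta> Ca Cb" using finite_same_card_bij Ca Cb by metis
    have CaV: "c \<in> V" "c \<notin> K" if "c \<in> Ca" for c using that Ca CAV by auto
    have \<beta>V: "\<beta> c \<in> V" "\<beta> c \<in> CB" if "c \<in> Ca" for c
      using that bij_betw_apply[OF \<beta>] Cb CBV by auto
    define t where "t c = inv (rep c) \<otimes> rep (\<beta> c)" for c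
    have tc: "t c \<in> carrier G" if "c \<in> Ca" for c using rep CaV \<beta>V that unfolding t_def by auto
    have "\<forall>c\<in>Ca. \<exists>n. t c \<in> Bl G S n" using gen_Bl[OF SG Sinv] gen tc by auto
    then obtain nc where nc: "\<forall>c\<in>Ca. t c \<in> Bl G S (nc c)" by (rule bchoice[THEN exE])
    define k where "k = Max (insert 0 (nc ` Ca))"
    have tk: "t c \<in> Bl G S k" if "c \<in> Ca" for c
    proof -
      have "nc c \<le> k" unfolding k_def using Ca(2) that by simp
      then have "Bl G S (nc c) \<subseteq> Bl G S k" by (rule Bl_mono)
      moreover have "t c \<in> Bl G S (nc c)" using nc that by blast
      ultimately show ?thesis by (rule subsetD)
    qed
    show "\<exists>k. \<forall>r. \<exists>U F Ou \<mu>. U \<subseteq> carrier G \<and> F \<subseteq> carrier G \<and> Ou \<subseteq> carrier G \<and>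
         finite U \<and> finite F \<and> finite Ou \<and> U \<inter> F = {} \<and> U \<inter> Ou = {} \<and> F \<inter> Ou = {} \<and>
         U \<noteq> {} \<and> m * card F \<le> card U \<and> bij_betw \<mu> U Ou \<and>
         (\<forall>u\<in>U. gdist (carrier G) (cayley_edge G S) u (\<mu> u) \<le> enat k) \<and>
         (\<forall>p. walk (carrier G) (cayley_edge G S) p \<and> hd p \<in> U \<and> last p \<in> Ou \<longrightarrow>
              set p \<inter> F \<noteq> {} \<or> r \<le> walk_len p)"
    proof (intro exI[of _ k] allI)
      fix r :: nat
      define B where "B = Bl G S r"
      have Bfin: "finite B" unfolding B_def using Sfin by (rule Bl_finite)
      have BG: "B \<subseteq> carrier G" unfolding B_def using SG by (rule Bl_carrier)
      define W0 where "W0 = H \<inter> ((\<lambda>(c,z,\<kappa>). inv (rep c \<otimes> z \<otimes> inv (rep \<kappa>))) ` (Ca \<times> B \<times> K))"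
      have W0: "finite W0" "W0 \<subseteq> H" unfolding W0_def using Ca(2) Bfin K(2) by auto
      define Yn where "Yn N = H \<inter> Bl G S N" for N
      have Yfin: "finite (Yn N)" for N unfolding Yn_def using Bl_finite[OF Sfin] by blast
      have Ymono: "Yn N \<subseteq> Yn (Suc N)" for N unfolding Yn_def using Bl_mono[of N "Suc N" G S] by auto
      have Yun: "(\<Union>N. Yn N) = H"
      proof
        show "(\<Union>N. Yn N) \<subseteq> H" unfolding Yn_def by auto
        show "H \<subseteq> (\<Union>N. Yn N)"
        proof
          fix h assume "h \<in> H"
          then have "h \<in> generate G S" using HG gen by auto
          then obtain N where "h \<in> Bl G S N" using gen_Bl[OF SG Sinv] by blast
          then show "h \<in> (\<Union>N. Yn N)" using \<open>h \<in> H\<close> unfolding Yn_def by auto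
        qed
      qed
      obtain Y where Y: "finite Y" "Y \<noteq> {}" "Y \<subseteq> H" "card (W0 <#> Y) \<le> 2 * card Y"
        using folner_weak[OF grp sub one pos add linv W0 Yfin Ymono Yun] by blast
      define U where "U = (\<lambda>(y,c). inv y \<otimes> rep c) ` (Y \<times> Ca)"
      define mf where "mf u = u \<otimes> t (H #> u)" for u
      define Ou where "Ou = mf ` U"
      define F where "F = {v \<in> carrier G. H #> v \<in> K \<and> (\<exists>u\<in>U. \<exists>z\<in>B. v = u \<otimes> z)}"
      have uc: "inv y \<otimes> rep c \<in> carrier G" "H #> (inv y \<otimes> rep c) = c"
        "mf (inv y \<otimes> rep c) = inv y \<otimes> rep (\<beta> c)" "inv y \<otimes> rep (\<beta> c) \<in> carrier G"
        "H #> (inv y \<otimes> rep (\<beta> c)) = \<beta> c"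
        if "y \<in> Y" "c \<in> Ca" for y c
      proof -
        have y: "inv y \<in> H" "inv y \<in> carrier G" using that Y(3) inH HG by auto
        have r1: "rep c \<in> carrier G" "c = H #> rep c" using rep CaV that by auto
        have r2: "rep (\<beta> c) \<in> carrier G" "\<beta> c = H #> rep (\<beta> c)" using rep \<beta>V that by auto
        show "inv y \<otimes> rep c \<in> carrier G" using y r1 by auto
        show c1: "H #> (inv y \<otimes> rep c) = c" using piH y r1 by auto
        show "mf (inv y \<otimes> rep c) = inv y \<otimes> rep (\<beta> c)"
          unfolding mf_def c1 t_def using y r1 r2 cancel1 by (simp add: m_assoc)
        show "inv y \<otimes> rep (\<beta> c) \<in> carrier G" using y r2 by auto
        show "H #> (inv y \<otimes> rep (\<beta> c)) = \<beta> c" using piH y r2 by auto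
      qed
      have Umem: "\<exists>y\<in>Y. \<exists>c\<in>Ca. u = inv y \<otimes> rep c" if "u \<in> U" for u
        using that unfolding U_def by auto
      have Oumem: "\<exists>y\<in>Y. \<exists>c\<in>Ca. ov = inv y \<otimes> rep (\<beta> c)" if "ov \<in> Ou" for ov
        using that uc(3) unfolding Ou_def U_def by force
      have UG: "U \<subseteq> carrier G" using Umem uc(1) by blast
      have OG: "Ou \<subseteq> carrier G" using Oumem uc(4) by blast
      have FG: "F \<subseteq> carrier G" unfolding F_def by auto
      have Ufin: "finite U" unfolding U_def using Y(1) Ca(2) by auto
      have Oufin: "finite Ou" unfolding Ou_def using Ufin by auto
      have "F \<subseteq> (\<lambda>(u,z). u \<otimes> z) ` (U \<times> B)" unfolding F_def by auto
      then have Ffin: "finite F" using Ufin Bfin by (meson finite_SigmaI finite_imageI finite_subset)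
      have piU: "H #> u \<in> CA" if "u \<in> U" for u using Umem[OF that] uc(2) Ca(1) by auto
      have piO: "H #> ov \<in> CB" if "ov \<in> Ou" for ov using Oumem[OF that] uc(5) \<beta>V by auto
      have piF: "H #> v \<in> K" if "v \<in> F" for v using that unfolding F_def by auto
      have UF: "U \<inter> F = {}" using piU piF CAV by blast
      have UO: "U \<inter> Ou = {}" using piU piO disj by blast
      have FO: "F \<inter> Ou = {}" using piO piF CBV by blast
      have Une: "U \<noteq> {}"
      proof -
        have "Ca \<noteq> {}" using Ca M_def by auto
        then show ?thesis using Y(2) unfolding U_def by auto
      qed
      have injU: "inj_on (\<lambda>(y,c). inv y \<otimes> rep c) (Y \<times> Ca)"
      proof (rule inj_onI, clarify)
        fix y c y' c' assume a: "y \<in> Y" "c \<in> Ca" "y' \<in> Y" "c' \<in> Ca" "inv y \<otimes> rep c = inv y' \<otimes> rep c'"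
        have "H #> (inv y \<otimes> rep c) = H #> (inv y' \<otimes> rep c')" using a(5) by simp
        then have cc: "c = c'" using uc(2)[OF a(1,2)] uc(2)[OF a(3,4)] by simp
        have yc: "y \<in> carrier G" "y' \<in> carrier G" using a Y(3) HG by auto
        have "rep c \<in> carrier G" using rep CaV a by auto
        then have "inv y = inv y'" using a(5) cc yc by simp
        then show "y = y' \<and> c = c'" using cc yc by (metis inv_inv)
      qed
      have cardU: "card U = card Y * M" unfolding U_def
        using card_image[OF injU] Ca(3) by (simp add: card_cartesian_product)
      have setm: "W0 <#> Y = (\<lambda>(w,y). w \<otimes> y) ` (W0 \<times> Y)" unfolding set_mult_def by auto
      have WYfin: "finite (W0 <#> Y)" unfolding setm using W0(1) Y(1) by auto
      have Fsub: "F \<subseteq> (\<lambda>(x,\<kappa>). inv x \<otimes> rep \<kappa>) ` ((W0 <#> Y) \<times> K)"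
      proof
        fix v assume v: "v \<in> F"
        then obtain u z where vu: "v \<in> carrier G" "H #> v \<in> K" "u \<in> U" "z \<in> B" "v = u \<otimes> z"
          unfolding F_def by blast
        obtain y c where yc: "y \<in> Y" "c \<in> Ca" "u = inv y \<otimes> rep c" using Umem[OF vu(3)] by blast
        define \<kappa> where "\<kappa> = H #> v"
        define \<rho> where "\<rho> = rep \<kappa>"
        have \<rho>: "\<rho> \<in> carrier G" "\<kappa> = H #> \<rho>" using rep[of \<kappa>] K(1) vu(2) unfolding \<kappa>_def \<rho>_def by auto
        have "v \<in> H #> \<rho>" using rcos_self[OF vu(1) sub] \<rho>(2) unfolding \<kappa>_def by simp
        then have v\<rho>: "v \<otimes> inv \<rho> \<in> H" using subgroup.rcos_module_imp[OF sub grp \<rho>(1)] by blast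
        have ac: "rep c \<in> carrier G" using rep CaV yc(2) by auto
        have zc: "z \<in> carrier G" using vu(4) BG by auto
        have ycar: "y \<in> carrier G" using yc(1) Y(3) HG by auto
        have e1: "rep c \<otimes> z \<otimes> inv \<rho> = y \<otimes> (v \<otimes> inv \<rho>)"
          using vu(5) yc(3) ac zc ycar \<rho>(1) cancel1 by (simp add: m_assoc)
        have "rep c \<otimes> z \<otimes> inv \<rho> \<in> H" unfolding e1 using yc(1) Y(3) v\<rho> sub by (simp add: subgroup.m_closed subsetD)
        then have wH: "inv (rep c \<otimes> z \<otimes> inv \<rho>) \<in> H" using inH by blast
        define w where "w = inv (rep c \<otimes> z \<otimes> inv \<rho>)"
        have wW: "w \<in> W0" unfolding W0_def w_def \<rho>_def using wH yc(2) vu(4) vu(2) unfolding \<kappa>_def[symmetric] \<rho>_def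
          by (auto intro!: image_eqI[where x="(c, z, \<kappa>)"])
        have xW: "w \<otimes> y \<in> W0 <#> Y" unfolding setm using wW yc(1) by auto
        have wc: "w \<in> carrier G" using wH HG w_def by auto
        have "inv (w \<otimes> y) \<otimes> \<rho> = v"
          unfolding w_def using vu(5) yc(3) ac zc ycar \<rho>(1)
          by (simp add: inv_mult_group m_assoc)
        moreover have "\<kappa> \<in> K" using vu(2) \<kappa>_def by simp
        ultimately show "v \<in> (\<lambda>(x,\<kappa>). inv x \<otimes> rep \<kappa>) ` ((W0 <#> Y) \<times> K)"
          using xW unfolding \<rho>_def by (intro image_eqI[where x="(w \<otimes> y, \<kappa>)"]) auto
      qed
      have "card F \<le> card ((W0 <#> Y) \<times> K)"
        using card_mono[OF _ Fsub] card_image_le WYfin K(2) by (meson finite_SigmaI finite_imageI le_trans)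
      then have cardF: "card F \<le> card (W0 <#> Y) * n" unfolding n_def by (simp add: card_cartesian_product)
      have cardUF: "m * card F \<le> card U"
      proof -
        have "m * card F \<le> m * (card (W0 <#> Y) * n)" using cardF by simp
        also have "\<dots> \<le> m * (2 * card Y * n)" using Y(4) by simp
        also have "\<dots> \<le> card Y * M" unfolding M_def by simp
        finally show ?thesis using cardU by simp
      qed
      have injmf: "inj_on mf U"
      proof (rule inj_onI)
        fix u u' assume u: "u \<in> U" "u' \<in> U" "mf u = mf u'"
        obtain y c where yc: "y \<in> Y" "c \<in> Ca" "u = inv y \<otimes> rep c" using Umem[OF u(1)] by blast
        obtain y' c' where yc': "y' \<in> Y" "c' \<in> Ca" "u' = inv y' \<otimes> rep c'" using Umem[OF u(2)] by blast
        have e: "inv y \<otimes> rep (\<beta> c) = inv y' \<otimes> rep (\<beta> c')"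
          using u(3) uc(3)[OF yc(1,2)] uc(3)[OF yc'(1,2)] yc(3) yc'(3) by simp
        then have "H #> (inv y \<otimes> rep (\<beta> c)) = H #> (inv y' \<otimes> rep (\<beta> c'))" by simp
        then have "\<beta> c = \<beta> c'" using uc(5)[OF yc(1,2)] uc(5)[OF yc'(1,2)] by simp
        then have cc: "c = c'" using yc(2) yc'(2) by (rule inj_onD[OF bij_betw_imp_inj_on[OF \<beta>]])
        have ycar: "y \<in> carrier G" "y' \<in> carrier G" using yc(1) yc'(1) Y(3) HG by auto
        have "rep (\<beta> c) \<in> carrier G" using rep \<beta>V yc(2) by auto
        then have "inv y = inv y'" using e cc ycar by simp
        then have "y = y'" using ycar by (metis inv_inv)
        then show "u = u'" using yc yc' cc by simp
      qed
      have bij: "bij_betw mf U Ou" unfolding Ou_def using injmf by (simp add: bij_betw_def)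
      have gd: "\<forall>u\<in>U. gdist (carrier G) (cayley_edge G S) u (mf u) \<le> enat k"
      proof
        fix u assume u: "u \<in> U"
        obtain y c where yc: "y \<in> Y" "c \<in> Ca" "u = inv y \<otimes> rep c" using Umem[OF u] by blast
        have "mf u = u \<otimes> t c" unfolding mf_def using uc(2)[OF yc(1,2)] yc(3) by simp
        moreover obtain p where p: "walk (carrier G) (cayley_edge G S) p" "hd p = u" "last p = u \<otimes> t c"
          "walk_len p \<le> k"
          using Bl_walk[OF SG tk[OF yc(2)]] uc(1)[OF yc(1,2)] yc(3) by blast
        ultimately show "gdist (carrier G) (cayley_edge G S) u (mf u) \<le> enat k"
        proof -
          have "gdist (carrier G) (cayley_edge G S) u (u \<otimes> t c) \<le> enat (walk_len p)"
            using gdist_le[OF p(1,2,3)] .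
          also have "\<dots> \<le> enat k" using p(4) by simp
          finally show ?thesis using \<open>mf u = u \<otimes> t c\<close> by simp
        qed
      qed
      have sep: "set p \<inter> F \<noteq> {} \<or> r \<le> walk_len p"
        if p: "walk (carrier G) (cayley_edge G S) p" "hd p \<in> U" "last p \<in> Ou" for p
      proof (rule ccontr)
        assume "\<not> (set p \<inter> F \<noteq> {} \<or> r \<le> walk_len p)"
        then have pF: "set p \<inter> F = {}" and short: "walk_len p < r" by auto
        have pc: "set p \<subseteq> carrier G" and pne: "p \<noteq> []" using p(1) unfolding walk_def by auto
        show False
        proof (cases "\<exists>i<length p. H #> (p ! i) \<in> K")
          case True
          then obtain i where i: "i < length p" "H #> (p ! i) \<in> K" by blast
          obtain z where z: "z \<in> Bl G S i" "p ! i = hd p \<otimes> z"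
          proof -
            obtain z where "z \<in> Bl G S (walk_len (take (Suc i) p))"
              "last (take (Suc i) p) = hd (take (Suc i) p) \<otimes> z"
              using walk_Bl[OF SG walk_take(1)[OF p(1) i(1)]] by blast
            then show ?thesis using walk_take(2,3,4)[OF p(1) i(1)] that by simp
          qed
          have "i \<le> walk_len p" using i(1) unfolding walk_len_def by simp
          then have "i \<le> r" using short by simp
          then have "Bl G S i \<subseteq> Bl G S r" by (rule Bl_mono)
          then have "z \<in> B" using z(1) unfolding B_def by (rule subsetD)
          moreover have "p ! i \<in> carrier G" using pc i(1) nth_mem by blast
          ultimately have "p ! i \<in> F" unfolding F_def using i(2) z(2) p(2) by blast
          moreover have "p ! i \<in> set p" using i(1) by simp
          ultimately show False using pF by blast
        next
          case False
          have inVK: "\<forall>x\<in>set p. H #> x \<in> V - K"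
          proof
            fix x assume "x \<in> set p"
            then obtain i where "i < length p" "x = p ! i" by (metis in_set_conv_nth)
            then show "H #> x \<in> V - K" using False piV pc \<open>x \<in> set p\<close> by blast
          qed
          have wm: "walk (V - K) E (map (\<lambda>x. H #> x) p)"
            using walk_map(1)[OF p(1) inVK] piE by blast
          have "hd (map (\<lambda>x. H #> x) p) \<in> CA" using pne piU p(2) by (simp add: hd_map)
          then have "last (map (\<lambda>x. H #> x) p) \<in> CA"
            unfolding CA_def using comp_walk[OF _ wm] by blast
          then have "H #> last p \<in> CA" using pne by (simp add: last_map)
          then show False using piO[OF p(3)] disj by blast
        qed
      qed
      show "\<exists>U F Ou \<mu>. U \<subseteq> carrier G \<and> F \<subseteq> carrier G \<and> Ou \<subseteq> carrier G \<and>
         finite U \<and> finite F \<and> finite Ou \<and> U \<inter> F = {} \<and> U \<inter> Ou = {} \<and> F \<inter> Ou = {} \<and>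
         U \<noteq> {} \<and> m * card F \<le> card U \<and> bij_betw \<mu> U Ou \<and>
         (\<forall>u\<in>U. gdist (carrier G) (cayley_edge G S) u (\<mu> u) \<le> enat k) \<and>
         (\<forall>p. walk (carrier G) (cayley_edge G S) p \<and> hd p \<in> U \<and> last p \<in> Ou \<longrightarrow>
              set p \<inter> F \<noteq> {} \<or> r \<le> walk_len p)"
        by (intro exI[of _ U] exI[of _ F] exI[of _ Ou] exI[of _ mf] conjI allI impI;
            (fact | (elim conjE, rule sep)))
    qed
  qed
  then show ?thesis unfolding extraterrestrial_group_def using assms(2) by (intro exI[of _ S] conjI)
qed

end

theorem mainTheorem9:
  fixes G :: "('a, 'b) monoid_scheme" and H S :: "'a set"
  assumes "group G"
    and "finitely_generated_group G"
    and "amenable_subgroup H G"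
    and "fin_symm_gen_set G S"
    and "multi_ended (schreier_vertices G H) (schreier_edge G H S)"
  shows "extraterrestrial_group G"
  using group.main_aux[OF assms(1) assms(3,4,5)] .

end
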